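(* Let $FAF=\langle\mathcal A,\rho\rangle$ be a fuzzy argumentation framework and $E\subseteq\mathcal A$. For every $C\subseteq\mathcal A$: $E\in\mathcal{AE}(FAF,C)$ if and only if for every $S\in SCCS_{FAF}$, $$E\cap S\in\mathcal{AE}\big(FAF\downarrow_{R_{FAF}(S,E)},\,D_{FAF}(S,E)\cap C\big).$$
   Context: Fuzzy sets: a fuzzy set on a crisp set $X$ is a map $S:X\to[0,1]$; $S\subseteq S'$ means $S(x)\le S'(x)$ for all $x$; $\cap,\cup$ are pointwise $\min,\max$; $\mathrm{Supp}(S)=\{x:S(x)>0\}$. A fuzzy point $(x,a)$, $a\in(0,1]$, has value $a$ at $x$ and $0$ elsewhere; $(x,a)\in S$ means $a\le S(x)$. $a*b=\min\{a,b\}$. A fuzzy argumentation framework (FAF) is $\langle\mathcal A,\rho\rangle$ with $\mathrm{Args}$ a crisp set, $\mathcal A$ a fuzzy set on $\mathrm{Args}$, $\rho:\mathrm{Args}\times\mathrm{Args}\to[0,1]$, $\rho_{AB}=\rho(A,B)$; $A$ attacks $B$ iff $\rho_{AB}>0$. Fuzzy arguments are fuzzy points $(A,a)\in\mathcal A$. An attack of $(A,a)$ on $(B,b)$ is tolerable if $\min\{a,\rho_{AB}\}+b\le1$, sufficient otherwise. $(A,a)$ weakens $(B,b)$ to $(B,b')$, $b'=\min\{1-\min\{a,\rho_{AB}\},b\}$. $T\subseteq\mathcal A$ weakening defends $(C,c)$ if for every fuzzy argument $(B,b)$ sufficiently attacking $(C,c)$ there is $(A',a')\in T$ weakening $(B,b)$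 to some $(B,b')$ which tolerably attacks $(C,c)$. $T$ is conflict-free if no $(A,a),(B,b)\in T$ with $(A,a)$ sufficiently attacking $(B,b)$; admissible if conflict-free and it weakening defends every element of $T$. For $C\subseteq\mathcal A$, $\mathcal{AE}(FAF,C)$ is the set of admissible $E$ with $E\subseteq C$. Path-equivalence on $\mathrm{Args}$: $A\sim B$ iff $A=B$ or there are chains of attacks from $A$ to $B$ and from $B$ to $A$. $SCC_{FAF}(A)$ is the fuzzy set with value $\mathcal A(B)$ at each $B\sim A$, $0$ elsewhere; $SCCS_{FAF}$ is the set of these strongly connected components. $outparents_{FAF}(S)$ is the fuzzy set of $(B,\mathcal A(B))$ with $B\notin\mathrm{Supp}(S)$ attacking some argument of $\mathrm{Supp}(S)$. For $T\subseteq\mathcal A$, $FAF\downarrow_T=\langle T,\rho|_{\mathrm{Supp}(T)\times\mathrm{Supp}(T)}\rangle$, and notions in $FAF\downarrow_T$ refer to its own fuzzy arguments and attacks. For $E\subseteq\mathcal A$, $S\in SCCS_{FAF}$: $L_{FAF}(S,E)(A)=\max_B\big((E\cap outparents_{FAF}(S))(B)*\rho_{BA}\big)$ for $A\in\mathrm{Supp}(S)$, $0$ elsewhere; $R_{FAF}(S,E)(A)=\min\{\mathcal A(A),1-L_{FAF}(S,E)(A)\}$ for $A\in\mathrm{Supp}(S)$, $0$ elsewhere; $D_{FAF}(S,E)$ is the union of fuzzy points $(A,a)\in R_{FAF}(S,E)$ such that for every $(B,b)\in outparents_{FAF}(S)$ sufficiently attacking $(A,a)$ there is $(C,c)\in E$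 weakening $(B,b)$ to some $(B,b')$ which tolerably attacks $(A,a)$. *)

theory Defs
  imports Main "HOL.Real"
begin

definition fuzzy_set :: "('a \<Rightarrow> real) \<Rightarrow> bool" where
  "fuzzy_set S \<longleftrightarrow> (\<forall>x. 0 \<le> S x \<and> S x \<le> 1)"

definition fsub :: "('a \<Rightarrow> real) \<Rightarrow> ('a \<Rightarrow> real) \<Rightarrow> bool" where
  "fsub S S' \<longleftrightarrow> (\<forall>x. S x \<le> S' x)"

definition finter :: "('a \<Rightarrow> real) \<Rightarrow> ('a \<Rightarrow> real) \<Rightarrow> 'a \<Rightarrow> real" where
  "finter S S' = (\<lambda>x. min (S x) (S' x))"

definition supp :: "('a \<Rightarrow> real) \<Rightarrow> 'a set" where
  "supp S = {x. S x > 0}"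

definition fpin :: "'a \<Rightarrow> real \<Rightarrow> ('a \<Rightarrow> real) \<Rightarrow> bool" where
  "fpin x a S \<longleftrightarrow> 0 < a \<and> a \<le> 1 \<and> a \<le> S x"

definition sufficient_attack :: "('a \<Rightarrow> 'a \<Rightarrow> real) \<Rightarrow> 'a \<Rightarrow> real \<Rightarrow> 'a \<Rightarrow> real \<Rightarrow> bool" where
  "sufficient_attack \<rho> A a B b \<longleftrightarrow> \<rho> A B > 0 \<and> min a (\<rho> A B) + b > 1"

definition tolerable_attack :: "('a \<Rightarrow> 'a \<Rightarrow> real) \<Rightarrow> 'a \<Rightarrow> real \<Rightarrow> 'a \<Rightarrow> real \<Rightarrow> bool" where
  "tolerable_attack \<rho> A a B b \<longleftrightarrow> \<rho> A B > 0 \<and> min a (\<rho> A B) + b \<le> 1"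

definition weaken :: "('a \<Rightarrow> 'a \<Rightarrow> real) \<Rightarrow> 'a \<Rightarrow> real \<Rightarrow> 'a \<Rightarrow> real \<Rightarrow> real" where
  "weaken \<rho> A a B b = min (1 - min a (\<rho> A B)) b"

definition wdefends :: "('a \<Rightarrow> real) \<Rightarrow> ('a \<Rightarrow> 'a \<Rightarrow> real) \<Rightarrow> ('a \<Rightarrow> real) \<Rightarrow> 'a \<Rightarrow> real \<Rightarrow> bool" where
  "wdefends Af \<rho> T C c \<longleftrightarrow>
     (\<forall>B b. fpin B b Af \<and> sufficient_attack \<rho> B b C c \<longrightarrow>
        (\<exists>A' a'. fpin A' a' T \<and> tolerable_attack \<rho> B (weaken \<rho> A' a' B b) C c))"

definition conflict_free :: "('a \<Rightarrow> 'a \<Rightarrow> real) \<Rightarrow> ('a \<Rightarrow> real) \<Rightarrow> bool" where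
  "conflict_free \<rho> T \<longleftrightarrow>
     (\<forall>A a B b. fpin A a T \<and> fpin B b T \<longrightarrow> \<not> sufficient_attack \<rho> A a B b)"

definition admissible :: "('a \<Rightarrow> real) \<Rightarrow> ('a \<Rightarrow> 'a \<Rightarrow> real) \<Rightarrow> ('a \<Rightarrow> real) \<Rightarrow> bool" where
  "admissible Af \<rho> T \<longleftrightarrow> fsub T Af \<and> conflict_free \<rho> T \<and>
     (\<forall>C c. fpin C c T \<longrightarrow> wdefends Af \<rho> T C c)"

definition AE :: "('a \<Rightarrow> real) \<Rightarrow> ('a \<Rightarrow> 'a \<Rightarrow> real) \<Rightarrow> ('a \<Rightarrow> real) \<Rightarrow> ('a \<Rightarrow> real) set" where
  "AE Af \<rho> C = {E. admissible Af \<rho> E \<and> fsub E C}"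

definition attack_rel :: "('a \<Rightarrow> 'a \<Rightarrow> real) \<Rightarrow> ('a \<times> 'a) set" where
  "attack_rel \<rho> = {(x, y). \<rho> x y > 0}"

definition path_equiv :: "('a \<Rightarrow> 'a \<Rightarrow> real) \<Rightarrow> 'a \<Rightarrow> 'a \<Rightarrow> bool" where
  "path_equiv \<rho> A B \<longleftrightarrow> A = B \<or> ((A, B) \<in> (attack_rel \<rho>)\<^sup>+ \<and> (B, A) \<in> (attack_rel \<rho>)\<^sup>+)"

definition SCC :: "('a \<Rightarrow> real) \<Rightarrow> ('a \<Rightarrow> 'a \<Rightarrow> real) \<Rightarrow> 'a \<Rightarrow> 'a \<Rightarrow> real" where
  "SCC Af \<rho> A = (\<lambda>B. if path_equiv \<rho> A B then Af B else 0)"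

definition SCCS :: "('a \<Rightarrow> real) \<Rightarrow> ('a \<Rightarrow> 'a \<Rightarrow> real) \<Rightarrow> ('a \<Rightarrow> real) set" where
  "SCCS Af \<rho> = range (SCC Af \<rho>)"

definition outparents :: "('a \<Rightarrow> real) \<Rightarrow> ('a \<Rightarrow> 'a \<Rightarrow> real) \<Rightarrow> ('a \<Rightarrow> real) \<Rightarrow> 'a \<Rightarrow> real" where
  "outparents Af \<rho> S = (\<lambda>B. if B \<notin> supp S \<and> (\<exists>A \<in> supp S. \<rho> B A > 0) then Af B else 0)"

text \<open>Restriction FAF\<down>T: fuzzy set T, attack relation restricted to Supp(T).\<close>
definition restrict_att :: "('a \<Rightarrow> 'a \<Rightarrow> real) \<Rightarrow> ('a \<Rightarrow> real) \<Rightarrow> 'a \<Rightarrow> 'a \<Rightarrow> real" where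
  "restrict_att \<rho> T = (\<lambda>x y. if x \<in> supp T \<and> y \<in> supp T then \<rho> x y else 0)"

definition L_FAF :: "('a::finite \<Rightarrow> real) \<Rightarrow> ('a \<Rightarrow> 'a \<Rightarrow> real) \<Rightarrow> ('a \<Rightarrow> real) \<Rightarrow> ('a \<Rightarrow> real) \<Rightarrow> 'a \<Rightarrow> real" where
  "L_FAF Af \<rho> S E = (\<lambda>A. if A \<in> supp S
      then Max (range (\<lambda>B. min (finter E (outparents Af \<rho> S) B) (\<rho> B A))) else 0)"

definition R_FAF :: "('a::finite \<Rightarrow> real) \<Rightarrow> ('a \<Rightarrow> 'a \<Rightarrow> real) \<Rightarrow> ('a \<Rightarrow> real) \<Rightarrow> ('a \<Rightarrow> real) \<Rightarrow> 'a \<Rightarrow> real" where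
  "R_FAF Af \<rho> S E = (\<lambda>A. if A \<in> supp S then min (Af A) (1 - L_FAF Af \<rho> S E A) else 0)"

definition D_cond :: "('a::finite \<Rightarrow> real) \<Rightarrow> ('a \<Rightarrow> 'a \<Rightarrow> real) \<Rightarrow> ('a \<Rightarrow> real) \<Rightarrow> ('a \<Rightarrow> real) \<Rightarrow> 'a \<Rightarrow> real \<Rightarrow> bool" where
  "D_cond Af \<rho> S E A a \<longleftrightarrow> fpin A a (R_FAF Af \<rho> S E) \<and>
     (\<forall>B b. fpin B b (outparents Af \<rho> S) \<and> sufficient_attack \<rho> B b A a \<longrightarrow>
        (\<exists>C c. fpin C c E \<and> tolerable_attack \<rho> B (weaken \<rho> C c B b) A a))"

definition D_FAF :: "('a::finite \<Rightarrow> real) \<Rightarrow> ('a \<Rightarrow> 'a \<Rightarrow> real) \<Rightarrow> ('a \<Rightarrow> real) \<Rightarrow> ('a \<Rightarrow> real) \<Rightarrow> 'a \<Rightarrow> real" where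
  "D_FAF Af \<rho> S E = (\<lambda>A. Sup (insert 0 {a. D_cond Af \<rho> S E A a}))"

end

theory Submission imports Defs begin

locale faf =
  fixes Af :: "'a::finite \<Rightarrow> real" and \<rho> :: "'a \<Rightarrow> 'a \<Rightarrow> real" and E :: "'a \<Rightarrow> real"
  assumes Af: "fuzzy_set Af" and rho: "\<forall>x y. 0 \<le> \<rho> x y \<and> \<rho> x y \<le> 1"
    and Ef: "fuzzy_set E" and EA: "fsub E Af"
begin

lemma Af0: "0 \<le> Af x" and Af1: "Af x \<le> 1" using Af by (auto simp: fuzzy_set_def)
lemma E0: "0 \<le> E x" and E1: "E x \<le> 1" using Ef by (auto simp: fuzzy_set_def)
lemma r0: "0 \<le> \<rho> x y" and r1: "\<rho> x y \<le> 1" using rho by auto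
lemma EleA: "E x \<le> Af x" using EA by (auto simp: fsub_def)

lemma L_ge:
  assumes "A \<in> supp S" "B \<notin> supp S" "\<rho> B A > 0"
  shows "min (E B) (\<rho> B A) \<le> L_FAF Af \<rho> S E A"
proof -
  have "finter E (outparents Af \<rho> S) B = E B"
    using assms EleA[of B] by (auto simp: finter_def outparents_def)
  hence "min (E B) (\<rho> B A) \<in> range (\<lambda>B. min (finter E (outparents Af \<rho> S) B) (\<rho> B A))"
    by (metis (no_types, lifting) rangeI)
  hence "min (E B) (\<rho> B A) \<le> Max (range (\<lambda>B. min (finter E (outparents Af \<rho> S) B) (\<rho> B A)))"
    by (intro Max_ge) auto
  thus ?thesis using assms by (simp add: L_FAF_def)
qed

lemma L_in:
  assumes "A \<in> supp S"
  shows "\<exists>B. L_FAF Af \<rho> S E A = min (finter E (outparents Af \<rho> S) B) (\<rho> B A)"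
proof -
  have "Max (range (\<lambda>B. min (finter E (outparents Af \<rho> S) B) (\<rho> B A)))
     \<in> range (\<lambda>B. min (finter E (outparents Af \<rho> S) B) (\<rho> B A))"
    by (intro Max_in) auto
  then obtain B where "Max (range (\<lambda>B. min (finter E (outparents Af \<rho> S) B) (\<rho> B A)))
     = min (finter E (outparents Af \<rho> S) B) (\<rho> B A)" by blast
  thus ?thesis using assms by (auto simp: L_FAF_def)
qed

lemma L_nonneg: "0 \<le> L_FAF Af \<rho> S E A"
proof (cases "A \<in> supp S")
  case True
  then obtain B where B: "L_FAF Af \<rho> S E A = min (finter E (outparents Af \<rho> S) B) (\<rho> B A)"
    using L_in by blast
  have "0 \<le> finter E (outparents Af \<rho> S) B"
    using E0[of B] Af0[of B] by (auto simp: finter_def outparents_def)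
  thus ?thesis using B r0[of B A] by simp
qed (simp add: L_FAF_def)

lemma L_le1: "L_FAF Af \<rho> S E A \<le> 1"
proof (cases "A \<in> supp S")
  case True
  then obtain B where B: "L_FAF Af \<rho> S E A = min (finter E (outparents Af \<rho> S) B) (\<rho> B A)"
    using L_in by blast
  thus ?thesis using r1[of B A] by simp
qed (simp add: L_FAF_def)

lemma L_wit:
  assumes "A \<in> supp S" "L_FAF Af \<rho> S E A > 0"
  shows "\<exists>B. B \<notin> supp S \<and> \<rho> B A > 0 \<and> E B > 0 \<and> L_FAF Af \<rho> S E A = min (E B) (\<rho> B A)"
proof -
  obtain B where B: "L_FAF Af \<rho> S E A = min (finter E (outparents Af \<rho> S) B) (\<rho> B A)"
    using L_in assms(1) by blast
  have op: "outparents Af \<rho> S B > 0" using B assms(2) by (auto simp: finter_def)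
  hence c: "B \<notin> supp S \<and> (\<exists>A \<in> supp S. \<rho> B A > 0)" by (auto simp: outparents_def split: if_splits)
  have "finter E (outparents Af \<rho> S) B = E B"
    using c EleA[of B] by (auto simp: finter_def outparents_def)
  thus ?thesis using B assms c by (intro exI[of _ B]) auto
qed

lemma R_le: "R_FAF Af \<rho> S E A \<le> Af A"
  using Af0[of A] by (auto simp: R_FAF_def)
lemma R_supp: "A \<in> supp (R_FAF Af \<rho> S E) \<Longrightarrow> A \<in> supp S"
  by (auto simp: R_FAF_def supp_def split: if_splits)
lemma R_val: "A \<in> supp S \<Longrightarrow> R_FAF Af \<rho> S E A = min (Af A) (1 - L_FAF Af \<rho> S E A)"
  by (simp add: R_FAF_def)
lemma R_nonneg: "0 \<le> R_FAF Af \<rho> S E A"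
  using Af0[of A] L_le1[of S A] by (auto simp: R_FAF_def)

lemma D_bdd: "bdd_above (insert 0 {a. D_cond Af \<rho> S E A a})"
  by (rule bdd_aboveI[of _ 1]) (auto simp: D_cond_def fpin_def)
lemma D_upper: "D_cond Af \<rho> S E A a \<Longrightarrow> a \<le> D_FAF Af \<rho> S E A"
  unfolding D_FAF_def by (rule cSup_upper[OF _ D_bdd]) auto
lemma D_nonneg: "0 \<le> D_FAF Af \<rho> S E A"
  unfolding D_FAF_def by (rule cSup_upper[OF _ D_bdd]) auto

lemma suff_restr:
  assumes "sufficient_attack (restrict_att \<rho> T) A a B b"
  shows "sufficient_attack \<rho> A a B b \<and> A \<in> supp T \<and> B \<in> supp T"
  using assms by (auto simp: sufficient_attack_def restrict_att_def split: if_splits)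

lemma restr_eq: "x \<in> supp T \<Longrightarrow> y \<in> supp T \<Longrightarrow> restrict_att \<rho> T x y = \<rho> x y"
  by (simp add: restrict_att_def)

end
context faf begin

lemma S_val: assumes Sp: "\<And>x. S x = 0 \<or> S x = Af x" shows "x \<in> supp S \<Longrightarrow> S x = Af x"
  using Sp[of x] by (auto simp: supp_def)
lemma S_nn: assumes Sp: "\<And>x. S x = 0 \<or> S x = Af x" shows "0 \<le> S x"
  using Sp[of x] Af0[of x] by auto

lemma fsubR:
  assumes Sp: "\<And>x. S x = 0 \<or> S x = Af x" and cf: "conflict_free \<rho> E"
  shows "fsub (finter E S) (R_FAF Af \<rho> S E)"
  unfolding fsub_def
proof
  fix x
  show "finter E S x \<le> R_FAF Af \<rho> S E x"
  proof (cases "x \<in> supp S")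
    case False
    hence "S x = 0" using S_nn[OF Sp, of x] by (auto simp: supp_def)
    thus ?thesis using E0[of x] R_nonneg[of S x] by (simp add: finter_def)
  next
    case True
    have "E x \<le> 1 - L_FAF Af \<rho> S E x"
    proof (cases "E x > 0 \<and> L_FAF Af \<rho> S E x > 0")
      case False
      thus ?thesis using E0[of x] E1[of x] L_nonneg[of S x] L_le1[of S x] by auto
    next
      case c: True
      then obtain B where B: "B \<notin> supp S" "\<rho> B x > 0" "E B > 0" "L_FAF Af \<rho> S E x = min (E B) (\<rho> B x)"
        using L_wit True by blast
      have "\<not> sufficient_attack \<rho> B (E B) x (E x)"
        using cf B c E1[of B] E1[of x] unfolding conflict_free_def fpin_def by blast
      thus ?thesis using B by (auto simp: sufficient_attack_def)
    qed
    thus ?thesis using True EleA[of x] by (auto simp: finter_def R_val)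
  qed
qed

lemma fwd:
  assumes Sp: "\<And>x. S x = 0 \<or> S x = Af x" and adm: "admissible Af \<rho> E" and EC: "fsub E C"
    and Cf: "fuzzy_set C"
  shows "finter E S \<in> AE (R_FAF Af \<rho> S E) (restrict_att \<rho> (R_FAF Af \<rho> S E)) (finter (D_FAF Af \<rho> S E) C)"
proof -
  let ?R = "R_FAF Af \<rho> S E"
  have cf: "conflict_free \<rho> E" and wd: "\<And>C c. fpin C c E \<Longrightarrow> wdefends Af \<rho> E C c"
    using adm by (auto simp: admissible_def)
  have fR: "fsub (finter E S) ?R" by (rule fsubR[OF Sp cf])
  have fpES: "fpin x a E" if "fpin x a (finter E S)" for x a
    using that by (auto simp: fpin_def finter_def)
  have cfr: "conflict_free (restrict_att \<rho> ?R) (finter E S)"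
    unfolding conflict_free_def
  proof (intro allI impI notI)
    fix A a B b assume h: "fpin A a (finter E S) \<and> fpin B b (finter E S)"
      "sufficient_attack (restrict_att \<rho> ?R) A a B b"
    hence "sufficient_attack \<rho> A a B b" using suff_restr by blast
    thus False using cf h fpES unfolding conflict_free_def by blast
  qed
  have Dc: "D_cond Af \<rho> S E x (E x)" if x: "x \<in> supp S" "E x > 0" for x
    unfolding D_cond_def
  proof (intro conjI allI impI)
    have "finter E S x = E x" using S_val[OF Sp x(1)] EleA[of x] by (simp add: finter_def)
    thus "fpin x (E x) ?R" using fR x E1[of x] by (auto simp: fpin_def fsub_def) (metis)
  next
    fix B b assume h: "fpin B b (outparents Af \<rho> S) \<and> sufficient_attack \<rho> B b x (E x)"
    hence "fpin B b Af" by (auto simp: fpin_def outparents_def split: if_splits)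
    moreover have "fpin x (E x) E" using x E1[of x] by (auto simp: fpin_def)
    ultimately show "\<exists>C c. fpin C c E \<and> tolerable_attack \<rho> B (weaken \<rho> C c B b) x (E x)"
      using wd h unfolding wdefends_def by blast
  qed
  have fD: "fsub (finter E S) (finter (D_FAF Af \<rho> S E) C)"
    unfolding fsub_def
  proof
    fix x
    show "finter E S x \<le> finter (D_FAF Af \<rho> S E) C x"
    proof (cases "x \<in> supp S \<and> E x > 0")
      case True
      hence "E x \<le> D_FAF Af \<rho> S E x" using Dc D_upper by blast
      moreover have "E x \<le> C x" using EC by (auto simp: fsub_def)
      ultimately show ?thesis by (auto simp: finter_def)
    next
      case False
      hence "finter E S x \<le> 0" using E0[of x] S_nn[OF Sp, of x] by (auto simp: finter_def supp_def)
      moreover have "0 \<le> C x" using Cf by (auto simp: fuzzy_set_def)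
      ultimately show ?thesis using D_nonneg[of S x] by (auto simp: finter_def)
    qed
  qed
  have wdr: "wdefends ?R (restrict_att \<rho> ?R) (finter E S) C' c" if hC: "fpin C' c (finter E S)" for C' c
    unfolding wdefends_def
  proof (intro allI impI)
    fix B b assume h: "fpin B b ?R \<and> sufficient_attack (restrict_att \<rho> ?R) B b C' c"
    have s: "sufficient_attack \<rho> B b C' c" and BR: "B \<in> supp ?R" and CR: "C' \<in> supp ?R"
      using suff_restr h by blast+
    have BS: "B \<in> supp S" using R_supp BR by blast
    have fB: "fpin B b Af" using h R_le[of S B] by (auto simp: fpin_def)
    have fC: "fpin C' c E" using fpES hC by blast
    obtain A' a' where A': "fpin A' a' E" "tolerable_attack \<rho> B (weaken \<rho> A' a' B b) C' c"
      using wd[OF fC] fB s unfolding wdefends_def by blast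
    have b1: "b \<le> 1" using h by (auto simp: fpin_def)
    have rp: "\<rho> A' B > 0"
    proof (rule ccontr)
      assume "\<not> \<rho> A' B > 0"
      hence "\<rho> A' B = 0" using r0[of A' B] by auto
      hence "weaken \<rho> A' a' B b = b" using A' b1 by (auto simp: weaken_def fpin_def)
      thus False using A' s by (auto simp: tolerable_attack_def sufficient_attack_def)
    qed
    have A'S: "A' \<in> supp S"
    proof (rule ccontr)
      assume "A' \<notin> supp S"
      hence "min (E A') (\<rho> A' B) \<le> L_FAF Af \<rho> S E B" using L_ge BS rp by blast
      moreover have "b \<le> 1 - L_FAF Af \<rho> S E B" using h R_val[OF BS] by (auto simp: fpin_def)
      moreover have "a' \<le> E A'" using A' by (auto simp: fpin_def)
      ultimately have "weaken \<rho> A' a' B b = b" by (auto simp: weaken_def)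
      thus False using A' s by (auto simp: tolerable_attack_def sufficient_attack_def)
    qed
    have fA: "fpin A' a' (finter E S)"
      using A' S_val[OF Sp A'S] EleA[of A'] by (auto simp: fpin_def finter_def)
    hence A'R: "A' \<in> supp ?R" using fR by (auto simp: fpin_def fsub_def supp_def) (smt (verit))
    have "tolerable_attack (restrict_att \<rho> ?R) B (weaken (restrict_att \<rho> ?R) A' a' B b) C' c"
      using A' A'R BR CR by (simp add: restr_eq tolerable_attack_def weaken_def)
    thus "\<exists>A' a'. fpin A' a' (finter E S) \<and>
            tolerable_attack (restrict_att \<rho> ?R) B (weaken (restrict_att \<rho> ?R) A' a' B b) C' c"
      using fA by blast
  qed
  show ?thesis using fR cfr wdr fD by (auto simp: AE_def admissible_def)
qed

end
context faf begin

lemma SCC_Sp: "SCC Af \<rho> X x = 0 \<or> SCC Af \<rho> X x = Af x"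
  by (simp add: SCC_def)
lemma SCC_self: "Af x > 0 \<Longrightarrow> x \<in> supp (SCC Af \<rho> x)"
  by (simp add: SCC_def supp_def path_equiv_def)
lemma SCC_selfv: "SCC Af \<rho> x x = Af x"
  by (simp add: SCC_def path_equiv_def)

lemma bwd_defend:
  assumes Sp: "\<And>x. S x = 0 \<or> S x = Af x"
    and H: "finter E S \<in> AE (R_FAF Af \<rho> S E) (restrict_att \<rho> (R_FAF Af \<rho> S E)) (finter (D_FAF Af \<rho> S E) C)"
    and CS: "C' \<in> supp S" and fC: "fpin C' c E"
    and fB: "fpin B b Af" and s: "sufficient_attack \<rho> B b C' c"
  shows "\<exists>A' a'. fpin A' a' E \<and> tolerable_attack \<rho> B (weaken \<rho> A' a' B b) C' c"
proof -
  let ?R = "R_FAF Af \<rho> S E"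
  let ?L = "L_FAF Af \<rho> S E"
  let ?D = "D_FAF Af \<rho> S E"
  have fR: "fsub (finter E S) ?R" and cfr: "conflict_free (restrict_att \<rho> ?R) (finter E S)"
    and wdr: "\<And>C c. fpin C c (finter E S) \<Longrightarrow> wdefends ?R (restrict_att \<rho> ?R) (finter E S) C c"
    and fD: "fsub (finter E S) (finter ?D C)"
    using H by (auto simp: AE_def admissible_def)
  have fpES: "fpin x a E" if "fpin x a (finter E S)" for x a
    using that by (auto simp: fpin_def finter_def)
  have fCS: "fpin C' c (finter E S)"
    using fC S_val[OF Sp CS] EleA[of C'] by (auto simp: fpin_def finter_def)
  have inR: "x \<in> supp ?R" if "fpin x a (finter E S)" for x a
    using that fR by (auto simp: fpin_def fsub_def supp_def) (smt (verit))
  have CR: "C' \<in> supp ?R" using inR fCS by blast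
  have rBC: "\<rho> B C' > 0" and sv: "min b (\<rho> B C') + c > 1" using s by (auto simp: sufficient_attack_def)
  have b1: "b \<le> 1" "b > 0" "b \<le> Af B" using fB by (auto simp: fpin_def)
  have c1: "c \<le> 1" "c > 0" using fC by (auto simp: fpin_def)
  have inner: "\<exists>A' a'. fpin A' a' E \<and> min (min (1 - min a' (\<rho> A' B)) b0) (\<rho> B C') + c \<le> 1"
    if fb0: "fpin B b0 ?R" and sb0: "min b0 (\<rho> B C') + c > 1" for b0
  proof -
    have BR: "B \<in> supp ?R" using fb0 by (auto simp: fpin_def supp_def)
    have "sufficient_attack (restrict_att \<rho> ?R) B b0 C' c"
      using BR CR rBC sb0 by (simp add: restr_eq sufficient_attack_def)
    then obtain A' a' where A': "fpin A' a' (finter E S)"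
      "tolerable_attack (restrict_att \<rho> ?R) B (weaken (restrict_att \<rho> ?R) A' a' B b0) C' c"
      using wdr[OF fCS] fb0 unfolding wdefends_def by blast
    have "A' \<in> supp ?R" using inR A'(1) by blast
    hence "min (min (1 - min a' (\<rho> A' B)) b0) (\<rho> B C') + c \<le> 1"
      using A'(2) BR CR by (simp add: restr_eq tolerable_attack_def weaken_def)
    thus ?thesis using fpES A'(1) by blast
  qed
  show ?thesis
  proof (cases "B \<in> supp S")
    case BS: True
    show ?thesis
    proof (cases "b \<le> ?R B")
      case True
      hence "fpin B b ?R" using b1 by (auto simp: fpin_def)
      then obtain A' a' where "fpin A' a' E" "min (min (1 - min a' (\<rho> A' B)) b) (\<rho> B C') + c \<le> 1"
        using inner sv by blast
      thus ?thesis using rBC by (auto simp: tolerable_attack_def weaken_def)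
    next
      case False
      hence RB: "?R B = 1 - ?L B" "?R B < b" using R_val[OF BS] b1 by auto
      hence "?L B > 0" using b1 by auto
      then obtain B'' where B'': "B'' \<notin> supp S" "\<rho> B'' B > 0" "E B'' > 0" "?L B = min (E B'') (\<rho> B'' B)"
        using L_wit BS by blast
      have wB: "weaken \<rho> B'' (E B'') B b = ?R B" using RB B'' by (auto simp: weaken_def)
      have fB'': "fpin B'' (E B'') E" using B'' E1[of B''] by (auto simp: fpin_def)
      show ?thesis
      proof (cases "?R B > 0 \<and> min (?R B) (\<rho> B C') + c > 1")
        case True
        hence "fpin B (?R B) ?R" using R_le[of S B] Af1[of B] b1 by (auto simp: fpin_def)
        then obtain A' a' where A': "fpin A' a' E" "min (min (1 - min a' (\<rho> A' B)) (?R B)) (\<rho> B C') + c \<le> 1"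
          using inner True by blast
        have "min (min (1 - min a' (\<rho> A' B)) b) (\<rho> B C') + c \<le> 1"
          using A'(2) True RB(2) by (smt (verit))
        thus ?thesis using A'(1) rBC by (auto simp: tolerable_attack_def weaken_def)
      next
        case False
        have "min (?R B) (\<rho> B C') + c \<le> 1" using False R_nonneg[of S B] c1 by (auto)
        thus ?thesis using wB fB'' rBC unfolding tolerable_attack_def by (metis (no_types, lifting))
      qed
    qed
  next
    case BS: False
    have opB: "outparents Af \<rho> S B = Af B" using BS CS rBC by (auto simp: outparents_def)
    have cD: "c \<le> ?D C'"
    proof -
      have "min (E C') (S C') \<le> ?D C'" using fD unfolding fsub_def finter_def by (metis min.bounded_iff)
      thus ?thesis using fCS unfolding fpin_def finter_def by linarith
    qed
    let ?g = "\<lambda>x. min (weaken \<rho> x (E x) B b) (\<rho> B C')"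
    show ?thesis
    proof (rule ccontr)
      assume nt: "\<not> ?thesis"
      have gx: "?g x + c > 1" if "E x > 0" for x
      proof -
        have "fpin x (E x) E" using that E1[of x] by (auto simp: fpin_def)
        hence "\<not> tolerable_attack \<rho> B (weaken \<rho> x (E x) B b) C' c" using nt by blast
        thus ?thesis using rBC by (auto simp: tolerable_attack_def)
      qed
      define T where "T = insert (1 - min b (\<rho> B C')) ((\<lambda>x. 1 - ?g x) ` {x. E x > 0})"
      have Tf: "finite T" unfolding T_def by simp
      have Tlt: "Max T < c" using Tf gx sv unfolding T_def
        by (subst Max_less_iff) (auto, smt (verit) gx)
      have Tge: "1 - min b (\<rho> B C') \<le> Max T" "\<And>x. E x > 0 \<Longrightarrow> 1 - ?g x \<le> Max T"
        using Tf unfolding T_def by (auto intro!: Max_ge)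
      have "Max T < Sup (insert 0 {a. D_cond Af \<rho> S E C' a})"
        using Tlt cD unfolding D_FAF_def by auto
      then obtain a where a: "a \<in> insert 0 {a. D_cond Af \<rho> S E C' a}" "Max T < a"
        using less_cSup_iff[OF _ D_bdd] by blast
      have "0 \<le> 1 - min b (\<rho> B C')" using b1 by auto
      hence a0: "a > 0" using a Tge(1) by linarith
      hence Da: "D_cond Af \<rho> S E C' a" using a by auto
      have "fpin B b (outparents Af \<rho> S)" using fB opB by (simp add: fpin_def)
      moreover have "sufficient_attack \<rho> B b C' a" using rBC a(2) Tge(1)
        by (auto simp: sufficient_attack_def)
      ultimately obtain C'' c'' where C'': "fpin C'' c'' E" "tolerable_attack \<rho> B (weaken \<rho> C'' c'' B b) C' a"
        using Da unfolding D_cond_def by blast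
      have EC'': "E C'' > 0" "c'' \<le> E C''" using C''(1) by (auto simp: fpin_def)
      have "?g C'' \<le> min (weaken \<rho> C'' c'' B b) (\<rho> B C')"
        using EC'' by (auto simp: weaken_def)
      hence "?g C'' + a \<le> 1" using C''(2) by (auto simp: tolerable_attack_def)
      moreover have "1 - ?g C'' \<le> Max T" using Tge(2) EC''(1) by blast
      ultimately show False using a(2) by linarith
    qed
  qed
qed

end

theorem mainTheorem3:
  fixes Af :: "'a::finite \<Rightarrow> real" and \<rho> :: "'a \<Rightarrow> 'a \<Rightarrow> real"
    and E C :: "'a \<Rightarrow> real"
  assumes "fuzzy_set Af"
    and "\<forall>x y. 0 \<le> \<rho> x y \<and> \<rho> x y \<le> 1"
    and "fuzzy_set E" and "fsub E Af"
    and "fuzzy_set C" and "fsub C Af"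
  shows "E \<in> AE Af \<rho> C \<longleftrightarrow>
    (\<forall>S \<in> SCCS Af \<rho>.
       finter E S \<in> AE (R_FAF Af \<rho> S E) (restrict_att \<rho> (R_FAF Af \<rho> S E))
                       (finter (D_FAF Af \<rho> S E) C))"
proof -
  interpret faf Af \<rho> E using assms by (unfold_locales) auto
  show ?thesis
  proof
    assume "E \<in> AE Af \<rho> C"
    hence adm: "admissible Af \<rho> E" and EC: "fsub E C" by (auto simp: AE_def)
    show "\<forall>S \<in> SCCS Af \<rho>. finter E S \<in> AE (R_FAF Af \<rho> S E) (restrict_att \<rho> (R_FAF Af \<rho> S E))
                       (finter (D_FAF Af \<rho> S E) C)"
      unfolding SCCS_def proof
      fix S assume "S \<in> range (SCC Af \<rho>)"
      then obtain X where "S = SCC Af \<rho> X" by blast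
      thus "finter E S \<in> AE (R_FAF Af \<rho> S E) (restrict_att \<rho> (R_FAF Af \<rho> S E))
                       (finter (D_FAF Af \<rho> S E) C)"
        using fwd[OF SCC_Sp[of X] adm EC assms(5)] by simp
    qed
  next
    assume H0: "\<forall>S \<in> SCCS Af \<rho>. finter E S \<in> AE (R_FAF Af \<rho> S E) (restrict_att \<rho> (R_FAF Af \<rho> S E))
                       (finter (D_FAF Af \<rho> S E) C)"
    let ?S = "\<lambda>X. SCC Af \<rho> X"
    have H: "finter E (?S X) \<in> AE (R_FAF Af \<rho> (?S X) E) (restrict_att \<rho> (R_FAF Af \<rho> (?S X) E))
                       (finter (D_FAF Af \<rho> (?S X) E) C)" for X
      using H0 unfolding SCCS_def by blast
    have fR: "fsub (finter E (?S X)) (R_FAF Af \<rho> (?S X) E)"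
      and cfr: "conflict_free (restrict_att \<rho> (R_FAF Af \<rho> (?S X) E)) (finter E (?S X))"
      and fD: "fsub (finter E (?S X)) (finter (D_FAF Af \<rho> (?S X) E) C)" for X
      using H[of X] by (auto simp: AE_def admissible_def)
    have EC: "fsub E C" unfolding fsub_def
    proof
      fix x
      have "finter E (?S x) x = E x" using SCC_selfv[of x] EleA[of x] by (simp add: finter_def)
      thus "E x \<le> C x" using fD[of x] unfolding fsub_def finter_def by (metis min.bounded_iff)
    qed
    have fES: "fpin x a (finter E (?S X))" if "fpin x a E" "x \<in> supp (?S X)" for x a X
      using that S_val[OF SCC_Sp[of X], of x] EleA[of x] by (auto simp: fpin_def finter_def)
    have suppB: "B \<in> supp (?S B)" if "fpin B b E" for B b
      using SCC_self[of B] that EleA[of B] by (auto simp: fpin_def)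
    have cf: "conflict_free \<rho> E" unfolding conflict_free_def
    proof (intro allI impI notI)
      fix A a B b assume h: "fpin A a E \<and> fpin B b E" "sufficient_attack \<rho> A a B b"
      have BS: "B \<in> supp (?S B)" using suppB h by blast
      let ?R = "R_FAF Af \<rho> (?S B) E"
      have inR: "x \<in> supp ?R" if "fpin x a (finter E (?S B))" for x a
        using that fR[of B] by (auto simp: fpin_def fsub_def supp_def) (smt (verit))
      show False
      proof (cases "A \<in> supp (?S B)")
        case True
        have fA: "fpin A a (finter E (?S B))" and fB: "fpin B b (finter E (?S B))"
          using fES h True BS by blast+
        have "sufficient_attack (restrict_att \<rho> ?R) A a B b"
          using h inR[OF fA] inR[OF fB] by (simp add: restr_eq sufficient_attack_def)
        thus False using cfr[of B] fA fB unfolding conflict_free_def by blast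
      next
        case False
        have rp: "\<rho> A B > 0" using h by (auto simp: sufficient_attack_def)
        have "min (E A) (\<rho> A B) \<le> L_FAF Af \<rho> (?S B) E B" using L_ge[OF BS False rp] .
        moreover have fB: "fpin B b (finter E (?S B))" using fES h BS by blast
        hence "b \<le> ?R B" using fR[of B] unfolding fsub_def fpin_def by (metis order_trans)
        hence "b \<le> 1 - L_FAF Af \<rho> (?S B) E B" using R_val[OF BS] by simp
        moreover have "a \<le> E A" using h by (auto simp: fpin_def)
        ultimately show False using h(2) by (auto simp: sufficient_attack_def)
      qed
    qed
    have wd: "wdefends Af \<rho> E C' c" if fC: "fpin C' c E" for C' c
      unfolding wdefends_def
    proof (intro allI impI)
      fix B b assume h: "fpin B b Af \<and> sufficient_attack \<rho> B b C' c"
      show "\<exists>A' a'. fpin A' a' E \<and> tolerable_attack \<rho> B (weaken \<rho> A' a' B b) C' c"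
        using bwd_defend[OF SCC_Sp H suppB[OF fC] fC] h by blast
    qed
    show "E \<in> AE Af \<rho> C" using assms(4) cf wd EC by (auto simp: AE_def admissible_def)
  qed
qed

end
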